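(* Let $\alpha>0$ and let $(\omega_k)_{k\ge0}$ be the sequence defined below, satisfying the tie-breaking convention. Suppose there is $n\in\mathbb{N}$ such that $y(\omega_k)=y(\omega)$ for all $k<n$ and $y(\omega_n)\neq y(\omega)$. Then $f(y(\omega_n))<f(y(\omega))$.
   Context: Let $Y\subset\mathbb{R}^n$ be a finite non-empty set. For $\omega\in\mathbb{R}^n$, $y(\omega)$ denotes a chosen element of $\operatorname{argmin}_{y\in Y}\langle \omega,y\rangle$. Let $\ell:\mathbb{R}^n\to\mathbb{R}$ be differentiable and write $g(y)=\nabla \ell(y)$. Given $\omega\in\mathbb{R}^n$ and $\alpha>0$, define $\omega_0=\omega$ and $\omega_{k+1}=\omega_k+\alpha\, g(y(\omega_k))$ for $k\ge 0$. Tie-breaking convention: for every $k\ge1$, if $y(\omega_{k-1})$ is a minimizer of $\langle \omega_k,\cdot\rangle$ over $Y$, then $y(\omega_k)=y(\omega_{k-1})$. Define the linearized loss $f(y')=\ell(y(\omega))+\langle y'-y(\omega),\, g(y(\omega))\rangle$ for $y'\in Y$. *)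

theory Defs
  imports "HOL-Analysis.Analysis"
begin

definition argminY :: "(real^'n) set \<Rightarrow> real^'n \<Rightarrow> (real^'n) set" where
  "argminY Y w = {y \<in> Y. \<forall>y'\<in>Y. w \<bullet> y \<le> w \<bullet> y'}"

fun omega_seq :: "(real^'n \<Rightarrow> real^'n) \<Rightarrow> (real^'n \<Rightarrow> real^'n) \<Rightarrow> real \<Rightarrow> real^'n \<Rightarrow> nat \<Rightarrow> real^'n" where
  "omega_seq ysel g \<alpha> w 0 = w"
| "omega_seq ysel g \<alpha> w (Suc k) =
     omega_seq ysel g \<alpha> w k + \<alpha> *\<^sub>R g (ysel (omega_seq ysel g \<alpha> w k))"

definition lin_loss :: "(real^'n \<Rightarrow> real) \<Rightarrow> (real^'n \<Rightarrow> real^'n) \<Rightarrow> (real^'n \<Rightarrow> real^'n) \<Rightarrow> real^'n \<Rightarrow> real^'n \<Rightarrow> real" where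
  "lin_loss l g ysel w y' = l (ysel w) + (y' - ysel w) \<bullet> g (ysel w)"

end

theory Submission
  imports Defs
begin

theorem mainTheorem4:
  fixes Y :: "(real^'n) set"
    and ysel :: "real^'n \<Rightarrow> real^'n"
    and l :: "real^'n \<Rightarrow> real"
    and g :: "real^'n \<Rightarrow> real^'n"
    and w :: "real^'n"
    and \<alpha> :: real
    and N :: nat
  assumes finY: "finite Y" and neY: "Y \<noteq> {}"
    and ysel: "\<And>v. ysel v \<in> argminY Y v"
    and grad: "\<And>x. GDERIV l x :> g x"
    and alpha_pos: "\<alpha> > 0"
    and tie: "\<And>k. ysel (omega_seq ysel g \<alpha> w k) \<in> argminY Y (omega_seq ysel g \<alpha> w (Suc k))
                 \<Longrightarrow> ysel (omega_seq ysel g \<alpha> w (Suc k)) = ysel (omega_seq ysel g \<alpha> w k)"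
    and same: "\<And>k. k < N \<Longrightarrow> ysel (omega_seq ysel g \<alpha> w k) = ysel w"
    and diff: "ysel (omega_seq ysel g \<alpha> w N) \<noteq> ysel w"
  shows "lin_loss l g ysel w (ysel (omega_seq ysel g \<alpha> w N)) < lin_loss l g ysel w (ysel w)"
proof -
  obtain M where N: "N = Suc M" using diff by (cases N) auto
  define om where "om = omega_seq ysel g \<alpha> w"
  define y0 where "y0 = ysel w"
  define y1 where "y1 = ysel (om N)"
  have yM: "ysel (om M) = y0" using same[of M] N unfolding om_def y0_def by simp
  have omN: "om N = om M + \<alpha> *\<^sub>R g y0" using N yM unfolding om_def by simp
  have notin: "y0 \<notin> argminY Y (om N)"
    using tie[of M] yM diff N unfolding om_def y0_def by auto
  have y0Y: "y0 \<in> Y" and y0min: "\<forall>y'\<in>Y. om M \<bullet> y0 \<le> om M \<bullet> y'"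
    using ysel[of "om M"] yM unfolding argminY_def by auto
  have y1Y: "y1 \<in> Y" and y1min: "\<forall>y'\<in>Y. om N \<bullet> y1 \<le> om N \<bullet> y'"
    using ysel[of "om N"] unfolding argminY_def y1_def by auto
  obtain y' where "y' \<in> Y" "om N \<bullet> y' < om N \<bullet> y0"
    using notin y0Y unfolding argminY_def by (auto simp: not_le)
  hence lt: "om N \<bullet> y1 < om N \<bullet> y0" using y1min by force
  have le: "om M \<bullet> y0 \<le> om M \<bullet> y1" using y0min y1Y by auto
  have "\<alpha> * (g y0 \<bullet> y1) < \<alpha> * (g y0 \<bullet> y0)"
    using lt le unfolding omN by (simp add: inner_add_left)
  hence "g y0 \<bullet> y1 < g y0 \<bullet> y0" using alpha_pos by simp
  thus ?thesis unfolding lin_loss_def y1_def[symmetric] om_def[symmetric] y0_def[symmetric]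
    by (simp add: inner_diff_right inner_commute)
qed

end
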